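(* Let $\mathcal C\subseteq2^{[n]}$ be a nonempty code. For all $\sigma,\tau\subseteq[n]$, $x^\sigma y^\tau\in I_{\Gamma(\mathcal C)}$ if and only if $x^\sigma(1-x)^\tau\in I_{\mathcal C}$. Consequently, $$I_{\Gamma(\mathcal C)}=\langle x^\sigma y^\tau : x^\sigma(1-x)^\tau\in CF(J_{\mathcal C})\rangle+\langle x_iy_i: i\in[n]\rangle.$$
   Context: Let $R=\mathbb F_2[x_1,\dots,x_n]$ and $S=\mathbb F_2[x_1,\dots,x_n,y_1,\dots,y_n]$. For $\sigma,\tau\subseteq[n]$ write $x^\sigma=\prod_{i\in\sigma}x_i$, $y^\tau=\prod_{j\in\tau}y_j$, $(1-x)^\tau=\prod_{j\in\tau}(1-x_j)$; polynomials $x^\sigma(1-x)^\tau$ are pseudo-monomials. A polynomial $f\in R$ is evaluated at $\sigma\subseteq[n]$ by setting $x_i=1$ for $i\in\sigma$ and $x_i=0$ otherwise. $I_{\mathcal C}=\{f\in R: f(\sigma)=0\ \forall\sigma\in\mathcal C\}$; the neural ideal is $J_{\mathcal C}=\langle x^\sigma(1-x)^{[n]\setminus\sigma}:\sigma\notin\mathcal C\rangle$; the canonical form $CF(J_{\mathcal C})$ is the set of pseudo-monomials $f\in J_{\mathcal C}$ such that no other pseudo-monomial in $J_{\mathcal C}$ divides $f$. The polar complex $\Gamma(\mathcal C)$ is the simplicial complex on $[n]\sqcup\{\bar1,\dots,\bar n\}$ of all subsets of $\sigma\sqcup\{\bar i:i\notin\sigma\}$, $\sigma\in\mathcal C$;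 its Stanley–Reisner ideal (identifying vertex $i$ with $x_i$ and $\bar i$ with $y_i$) is $I_{\Gamma(\mathcal C)}=\langle x^\sigma y^\tau:\sigma\sqcup\{\bar j:j\in\tau\}\notin\Gamma(\mathcal C)\rangle\subseteq S$. *)

theory Defs
  imports "HOL-Library.Poly_Mapping" "HOL-Library.Z2"
begin

text \<open>Multivariate polynomials over F_2 (type bit) in variables of type 'v:
  maps from finitely supported exponent vectors to coefficients.
  The ground set [n] is the finite type 'n; R has variables x_i (i :: 'n),
  S has variables Inl i (= x_i) and Inr i (= y_i).\<close>

type_synonym 'v mpoly2 = "('v \<Rightarrow>\<^sub>0 nat) \<Rightarrow>\<^sub>0 bit"

definition Var :: "'v \<Rightarrow> 'v mpoly2" where
  "Var i = Poly_Mapping.single (Poly_Mapping.single i 1) 1"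

definition ideal_gen :: "'a::comm_ring_1 set \<Rightarrow> 'a set" where
  "ideal_gen G = {p. \<exists>F c. finite F \<and> F \<subseteq> G \<and> p = (\<Sum>f\<in>F. c f * f)}"

definition xmon :: "'n set \<Rightarrow> 'n mpoly2" where
  "xmon \<sigma> = (\<Prod>i\<in>\<sigma>. Var i)"

definition omx :: "'n set \<Rightarrow> 'n mpoly2" where
  "omx \<tau> = (\<Prod>j\<in>\<tau>. 1 - Var j)"

definition pmon :: "'n set \<Rightarrow> 'n set \<Rightarrow> 'n mpoly2" where
  "pmon \<sigma> \<tau> = xmon \<sigma> * omx \<tau>"

definition pseudo_monomial :: "'n::finite mpoly2 \<Rightarrow> bool" where
  "pseudo_monomial f \<longleftrightarrow> (\<exists>\<sigma> \<tau>. \<sigma> \<inter> \<tau> = {} \<and> f = pmon \<sigma> \<tau>)"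

definition eval_at :: "'n::finite mpoly2 \<Rightarrow> 'n set \<Rightarrow> bit" where
  "eval_at f \<sigma> = (\<Sum>m\<in>Poly_Mapping.keys f.
      Poly_Mapping.lookup f m * (\<Prod>i\<in>UNIV. (if i \<in> \<sigma> then 1 else 0) ^ Poly_Mapping.lookup m i))"

definition I_code :: "'n::finite set set \<Rightarrow> 'n mpoly2 set" where
  "I_code C = {f. \<forall>\<sigma>\<in>C. eval_at f \<sigma> = 0}"

definition neural_ideal :: "'n::finite set set \<Rightarrow> 'n mpoly2 set" where
  "neural_ideal C = ideal_gen {pmon \<sigma> (UNIV - \<sigma>) | \<sigma>. \<sigma> \<notin> C}"

definition canonical_form :: "'n::finite set set \<Rightarrow> 'n mpoly2 set" where
  "canonical_form C = {f. pseudo_monomial f \<and> f \<in> neural_ideal C \<and>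
      (\<forall>g. pseudo_monomial g \<and> g \<in> neural_ideal C \<and> g \<noteq> f \<longrightarrow> \<not> g dvd f)}"

text \<open>Polar complex on vertex set 'n + 'n (Inl i = i, Inr i = bar i).\<close>
definition polar_complex :: "'n set set \<Rightarrow> ('n + 'n) set set" where
  "polar_complex C = {F. \<exists>\<sigma>\<in>C. F \<subseteq> Inl ` \<sigma> \<union> Inr ` (UNIV - \<sigma>)}"

definition xymon :: "'n set \<Rightarrow> 'n set \<Rightarrow> ('n + 'n) mpoly2" where
  "xymon \<sigma> \<tau> = (\<Prod>i\<in>\<sigma>. Var (Inl i)) * (\<Prod>j\<in>\<tau>. Var (Inr j))"

definition SR_ideal_polar :: "'n::finite set set \<Rightarrow> ('n + 'n) mpoly2 set" where
  "SR_ideal_polar C = ideal_gen {xymon \<sigma> \<tau> | \<sigma> \<tau>.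
      Inl ` \<sigma> \<union> Inr ` \<tau> \<notin> polar_complex C}"

end

theory Submission
  imports Defs
begin


definition mono :: "'v set \<Rightarrow> ('v \<Rightarrow>\<^sub>0 nat) \<Rightarrow> bit" where
  "mono \<rho> m = (\<Prod>i\<in>UNIV. (if i \<in> \<rho> then 1 else 0) ^ Poly_Mapping.lookup m i)"

lemma ev_superset:
  fixes f :: "'v::finite mpoly2"
  assumes "finite S" "Poly_Mapping.keys f \<subseteq> S"
  shows "eval_at f \<rho> = (\<Sum>m\<in>S. Poly_Mapping.lookup f m * mono \<rho> m)"
  unfolding eval_at_def mono_def
  by (rule sum.mono_neutral_left) (use assms in \<open>auto simp: in_keys_iff\<close>)

lemma ev_add: "eval_at (f + g :: 'v::finite mpoly2) \<rho> = eval_at f \<rho> + eval_at g \<rho>"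
proof -
  let ?S = "Poly_Mapping.keys f \<union> Poly_Mapping.keys g"
  have "eval_at (f+g) \<rho> = (\<Sum>m\<in>?S. Poly_Mapping.lookup (f+g) m * mono \<rho> m)"
    by (rule ev_superset) (use keys_add[of f g] in auto)
  also have "\<dots> = (\<Sum>m\<in>?S. Poly_Mapping.lookup f m * mono \<rho> m) + (\<Sum>m\<in>?S. Poly_Mapping.lookup g m * mono \<rho> m)"
    by (simp only: lookup_add distrib_right sum.distrib)
  also have "\<dots> = eval_at f \<rho> + eval_at g \<rho>"
    by (subst (1 2) ev_superset[where S="?S"]) auto
  finally show ?thesis .
qed

lemma ev_zero: "eval_at (0 :: 'v::finite mpoly2) \<rho> = 0"
  by (simp add: eval_at_def)

lemma ev_single: "eval_at (Poly_Mapping.single m c :: 'v::finite mpoly2) \<rho> = c * mono \<rho> m"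
  by (simp add: eval_at_def mono_def)

lemma ev_sum: "eval_at (\<Sum>x\<in>A. F x :: 'v::finite mpoly2) \<rho> = (\<Sum>x\<in>A. eval_at (F x) \<rho>)"
  by (induction A rule: infinite_finite_induct) (auto simp: ev_zero ev_add)

lemma expand: "(f :: ('a \<Rightarrow>\<^sub>0 bit)) = (\<Sum>m\<in>Poly_Mapping.keys f. Poly_Mapping.single m (Poly_Mapping.lookup f m))"
proof -
  have *: "finite I \<Longrightarrow> Poly_Mapping.lookup (\<Sum>m\<in>I. Poly_Mapping.single m (Poly_Mapping.lookup f m)) j =
            (if j \<in> I then Poly_Mapping.lookup f j else 0)" for I j
    by (induction I rule: finite_induct) (auto simp: lookup_single lookup_add when_def)
  show ?thesis
    by (rule poly_mapping_eqI) (simp only: * finite_keys, simp add: in_keys_iff)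
qed

lemma mono_add: "mono \<rho> (m + m') = mono \<rho> m * mono \<rho> m'"
  unfolding mono_def lookup_add power_add by (rule prod.distrib)

lemma ev_mult: "eval_at (f * g :: 'v::finite mpoly2) \<rho> = eval_at f \<rho> * eval_at g \<rho>"
proof -
  have "f * g = (\<Sum>m\<in>Poly_Mapping.keys f. Poly_Mapping.single m (Poly_Mapping.lookup f m)) *
     (\<Sum>m\<in>Poly_Mapping.keys g. Poly_Mapping.single m (Poly_Mapping.lookup g m))"
    using expand[of f] expand[of g] by simp
  also have "\<dots> = (\<Sum>m\<in>Poly_Mapping.keys f. \<Sum>m'\<in>Poly_Mapping.keys g.
      Poly_Mapping.single (m+m') (Poly_Mapping.lookup f m * Poly_Mapping.lookup g m'))"
    by (simp only: sum_product mult_single)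
  finally have "eval_at (f*g) \<rho> = (\<Sum>m\<in>Poly_Mapping.keys f. \<Sum>m'\<in>Poly_Mapping.keys g.
      (Poly_Mapping.lookup f m * mono \<rho> m) * (Poly_Mapping.lookup g m' * mono \<rho> m'))"
    by (simp only: ev_sum ev_single mono_add mult_ac)
  also have "\<dots> = eval_at f \<rho> * eval_at g \<rho>"
    by (simp only: eval_at_def mono_def sum_product)
  finally show ?thesis .
qed

lemma ev_diff: "eval_at (f - g :: 'v::finite mpoly2) \<rho> = eval_at f \<rho> - eval_at g \<rho>"
proof -
  have "eval_at f \<rho> = eval_at (f - g) \<rho> + eval_at g \<rho>"
    using ev_add[of "f-g" g] by simp
  then show ?thesis by (metis add_diff_cancel)
qed

lemma ev_one: "eval_at (1 :: 'v::finite mpoly2) \<rho> = 1"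
proof -
  have "eval_at (1 :: 'v mpoly2) \<rho> = eval_at (Poly_Mapping.single 0 1) \<rho>" by (simp only: single_one)
  also have "\<dots> = 1" by (simp only: ev_single) (simp add: mono_def)
  finally show ?thesis .
qed

lemma ev_var: "eval_at (Var i :: 'v::finite mpoly2) \<rho> = (if i \<in> \<rho> then 1 else 0)"
proof -
  have "mono \<rho> (Poly_Mapping.single i 1) = (\<Prod>k\<in>UNIV. if k = i then (if i \<in> \<rho> then 1 else 0) else 1)"
    unfolding mono_def by (rule prod.cong) (auto simp: lookup_single when_def)
  then show ?thesis by (simp add: Var_def ev_single)
qed

lemma ev_prod: "eval_at (\<Prod>x\<in>A. F x :: 'v::finite mpoly2) \<rho> = (\<Prod>x\<in>A. eval_at (F x) \<rho>)"
  by (induction A rule: infinite_finite_induct) (auto simp: ev_one ev_mult)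



lemma ig_base: "g \<in> G \<Longrightarrow> g \<in> ideal_gen G"
  unfolding ideal_gen_def by (rule CollectI, rule exI[of _ "{g}"], rule exI[of _ "\<lambda>_. 1"]) simp

lemma ig_zero: "0 \<in> ideal_gen G"
  unfolding ideal_gen_def by (rule CollectI, rule exI[of _ "{}"]) simp

lemma ig_add:
  assumes "p \<in> ideal_gen G" "q \<in> ideal_gen G" shows "p + q \<in> ideal_gen G"
proof -
  obtain F1 c1 where 1: "finite F1" "F1 \<subseteq> G" "p = (\<Sum>f\<in>F1. c1 f * f)"
    using assms(1) unfolding ideal_gen_def by blast
  obtain F2 c2 where 2: "finite F2" "F2 \<subseteq> G" "q = (\<Sum>f\<in>F2. c2 f * f)"
    using assms(2) unfolding ideal_gen_def by blast
  define c where "c f = (if f \<in> F1 then c1 f else 0) + (if f \<in> F2 then c2 f else 0)" for f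
  have "(\<Sum>f\<in>F1 \<union> F2. c f * f) = (\<Sum>f\<in>F1 \<union> F2. (if f \<in> F1 then c1 f * f else 0) + (if f \<in> F2 then c2 f * f else 0))"
    by (rule sum.cong) (simp_all add: c_def distrib_right)
  also have "\<dots> = (\<Sum>f\<in>F1 \<union> F2. (if f \<in> F1 then c1 f * f else 0)) + (\<Sum>f\<in>F1 \<union> F2. (if f \<in> F2 then c2 f * f else 0))"
    by (rule sum.distrib)
  also have "\<dots> = p + q"
    using 1 2 by (simp add: sum.If_cases Int_absorb1 Int_absorb2)
  finally show ?thesis unfolding ideal_gen_def using 1 2 by (intro CollectI exI[of _ "F1 \<union> F2"] exI[of _ c]) auto
qed

lemma ig_mult:
  assumes "p \<in> ideal_gen G" shows "r * p \<in> ideal_gen G"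
proof -
  obtain F c where 1: "finite F" "F \<subseteq> G" "p = (\<Sum>f\<in>F. c f * f)"
    using assms(1) unfolding ideal_gen_def by blast
  have "r * p = (\<Sum>f\<in>F. (r * c f) * f)" using 1 by (simp add: sum_distrib_left mult_ac)
  then show ?thesis unfolding ideal_gen_def using 1
    by (intro CollectI exI[of _ F] exI[of _ "\<lambda>f. r * c f"]) simp
qed

lemma ig_mult2: "p \<in> ideal_gen G \<Longrightarrow> p * r \<in> ideal_gen G"
  using ig_mult[of p G r] by (simp add: mult.commute)

lemma ig_mono:
  assumes "G \<subseteq> ideal_gen H" shows "ideal_gen G \<subseteq> ideal_gen H"
proof
  fix p assume "p \<in> ideal_gen G"
  then obtain F c where 1: "finite F" "F \<subseteq> G" "p = (\<Sum>f\<in>F. c f * f)"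
    unfolding ideal_gen_def by blast
  have "F \<subseteq> G \<Longrightarrow> (\<Sum>f\<in>F. c f * f) \<in> ideal_gen H"
    using 1(1)
  proof (induction F rule: finite_induct)
    case empty then show ?case by (simp add: ig_zero)
  next
    case (insert x F)
    then have "x \<in> ideal_gen H" "(\<Sum>f\<in>F. c f * f) \<in> ideal_gen H" using assms by auto
    then show ?case using insert(1,2) by (simp add: ig_add ig_mult)
  qed
  then show "p \<in> ideal_gen H" using 1 by simp
qed

lemma ig_hom:
  fixes G :: "'v::finite mpoly2 set"
  assumes "p \<in> ideal_gen G" "\<And>g. g \<in> G \<Longrightarrow> eval_at g \<rho> = 0"
  shows "eval_at p \<rho> = 0"
proof -
  obtain F c where 1: "finite F" "F \<subseteq> G" "p = (\<Sum>f\<in>F. c f * f)"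
    using assms(1) unfolding ideal_gen_def by blast
  have "eval_at p \<rho> = (\<Sum>f\<in>F. eval_at (c f) \<rho> * eval_at f \<rho>)"
    using 1 by (simp only: ev_sum ev_mult)
  also have "\<dots> = 0" using 1 assms(2) by (intro sum.neutral) auto
  finally show ?thesis .
qed

lemma prod_ind: "finite A \<Longrightarrow> (\<Prod>i\<in>A. (if P i then 1 else 0 :: bit)) = (if \<forall>i\<in>A. P i then 1 else 0)"
  by (induction A rule: finite_induct) auto

lemma ev_pmon:
  "eval_at (pmon \<sigma> \<tau> :: 'n::finite mpoly2) \<rho> = (if \<sigma> \<subseteq> \<rho> \<and> \<tau> \<inter> \<rho> = {} then 1 else 0)"
proof -
  have a: "eval_at (xmon \<sigma> :: 'n mpoly2) \<rho> = (if \<forall>i\<in>\<sigma>. i \<in> \<rho> then 1 else 0)"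
    unfolding xmon_def by (simp only: ev_prod ev_var prod_ind finite)
  have "eval_at (omx \<tau> :: 'n mpoly2) \<rho> = (\<Prod>j\<in>\<tau>. (if j \<notin> \<rho> then 1 else 0))"
    unfolding omx_def ev_prod by (rule prod.cong) (auto simp: ev_diff ev_one ev_var)
  also have "\<dots> = (if \<forall>j\<in>\<tau>. j \<notin> \<rho> then 1 else 0)" by (simp only: prod_ind finite)
  finally show ?thesis using a unfolding pmon_def ev_mult by auto
qed

lemma ev_xymon:
  "eval_at (xymon \<sigma> \<tau> :: ('n::finite + 'n) mpoly2) \<rho> = (if Inl ` \<sigma> \<union> Inr ` \<tau> \<subseteq> \<rho> then 1 else 0)"
proof -
  have a: "eval_at (\<Prod>i\<in>\<sigma>. Var (Inl i) :: ('n + 'n) mpoly2) \<rho> = (if \<forall>i\<in>\<sigma>. Inl i \<in> \<rho> then 1 else 0)"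
    by (simp only: ev_prod ev_var prod_ind finite)
  have b: "eval_at (\<Prod>i\<in>\<tau>. Var (Inr i) :: ('n + 'n) mpoly2) \<rho> = (if \<forall>i\<in>\<tau>. Inr i \<in> \<rho> then 1 else 0)"
    by (simp only: ev_prod ev_var prod_ind finite)
  show ?thesis unfolding xymon_def ev_mult a b by auto
qed

lemma face_sub: "Inl ` \<sigma> \<union> Inr ` \<tau> \<subseteq> Inl ` \<rho> \<union> Inr ` (UNIV - \<rho>) \<longleftrightarrow> \<sigma> \<subseteq> \<rho> \<and> \<tau> \<inter> \<rho> = {}"
  by (auto simp: image_iff)

lemma face_iff: "Inl ` \<sigma> \<union> Inr ` \<tau> \<in> polar_complex C \<longleftrightarrow> (\<exists>\<rho>\<in>C. \<sigma> \<subseteq> \<rho> \<and> \<tau> \<inter> \<rho> = {})"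
  unfolding polar_complex_def mem_Collect_eq face_sub by (rule refl)

lemma polar_down: "F \<in> polar_complex C \<Longrightarrow> F' \<subseteq> F \<Longrightarrow> F' \<in> polar_complex C"
  unfolding polar_complex_def by blast

lemma I_iff: "pmon \<sigma> \<tau> \<in> I_code C \<longleftrightarrow> \<not> (\<exists>\<rho>\<in>C. \<sigma> \<subseteq> \<rho> \<and> \<tau> \<inter> \<rho> = {})"
  unfolding I_code_def by (auto simp: ev_pmon)

lemma SR_iff:
  fixes C :: "'n::finite set set"
  shows "xymon \<sigma> \<tau> \<in> SR_ideal_polar C \<longleftrightarrow> Inl ` \<sigma> \<union> Inr ` \<tau> \<notin> polar_complex C"
proof
  assume "Inl ` \<sigma> \<union> Inr ` \<tau> \<notin> polar_complex C"
  then show "xymon \<sigma> \<tau> \<in> SR_ideal_polar C" unfolding SR_ideal_polar_def by (intro ig_base) blast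
next
  assume m: "xymon \<sigma> \<tau> \<in> SR_ideal_polar C"
  show "Inl ` \<sigma> \<union> Inr ` \<tau> \<notin> polar_complex C"
  proof
    assume f: "Inl ` \<sigma> \<union> Inr ` \<tau> \<in> polar_complex C"
    have "eval_at (xymon \<sigma> \<tau>) (Inl ` \<sigma> \<union> Inr ` \<tau>) = 0"
      using m unfolding SR_ideal_polar_def
    proof (rule ig_hom)
      fix g assume "g \<in> {xymon \<sigma> \<tau> |\<sigma> \<tau>. Inl ` \<sigma> \<union> Inr ` \<tau> \<notin> polar_complex C}"
      then obtain a b where g: "g = xymon a b" "Inl ` a \<union> Inr ` b \<notin> polar_complex C" by blast
      have "\<not> Inl ` a \<union> Inr ` b \<subseteq> Inl ` \<sigma> \<union> Inr ` \<tau>" using g(2) f polar_down by blast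
      then show "eval_at g (Inl ` \<sigma> \<union> Inr ` \<tau>) = 0" unfolding g(1) ev_xymon by simp
    qed
    then show False by (simp add: ev_xymon)
  qed
qed

lemma part1: "xymon \<sigma> \<tau> \<in> SR_ideal_polar C \<longleftrightarrow> pmon \<sigma> \<tau> \<in> I_code C"
  by (simp only: SR_iff I_iff face_iff)

lemma aux_eq: "\<sigma> \<subseteq> \<rho> \<Longrightarrow> (UNIV - \<sigma>) \<inter> \<rho> = {} \<Longrightarrow> \<rho> = \<sigma>" by blast

lemma J_sub_I: "f \<in> neural_ideal C \<Longrightarrow> f \<in> I_code C"
  unfolding I_code_def neural_ideal_def
proof (intro CollectI ballI)
  fix \<rho> assume "f \<in> ideal_gen {pmon \<sigma> (UNIV - \<sigma>) |\<sigma>. \<sigma> \<notin> C}" "\<rho> \<in> C"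
  then show "eval_at f \<rho> = 0"
    by (elim ig_hom) (auto simp: ev_pmon dest: aux_eq)
qed

lemma pmon_split:
  fixes \<sigma> \<tau> :: "'n::finite set"
  assumes "j \<notin> \<sigma>" "j \<notin> \<tau>"
  shows "pmon \<sigma> \<tau> = pmon (insert j \<sigma>) \<tau> + pmon \<sigma> (insert j \<tau>)"
proof -
  have 1: "pmon (insert j \<sigma>) \<tau> = Var j * pmon \<sigma> \<tau>"
    using assms unfolding pmon_def xmon_def omx_def by (simp add: mult.assoc)
  have 2: "pmon \<sigma> (insert j \<tau>) = (1 - Var j) * pmon \<sigma> \<tau>"
    using assms unfolding pmon_def xmon_def omx_def by (simp add: mult_ac)
  show ?thesis unfolding 1 2 distrib_right[symmetric] by simp
qed

lemma I_to_J:
  fixes C :: "'n::finite set set"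
  shows "\<sigma> \<inter> \<tau> = {} \<Longrightarrow> pmon \<sigma> \<tau> \<in> I_code C \<Longrightarrow> pmon \<sigma> \<tau> \<in> neural_ideal C"
proof (induction "card (UNIV - (\<sigma> \<union> \<tau>))" arbitrary: \<sigma> \<tau>)
  case 0
  then have t: "\<tau> = UNIV - \<sigma>" by auto
  have "\<sigma> \<notin> C" using 0(3) unfolding I_iff t by auto
  then show ?case unfolding neural_ideal_def t by (intro ig_base) blast
next
  case (Suc k)
  then obtain j where j: "j \<notin> \<sigma>" "j \<notin> \<tau>"
    by (metis Diff_empty Un_iff card.empty nat.distinct(1) subsetI subset_antisym Diff_eq_empty_iff)
  have c1: "card (UNIV - (insert j \<sigma> \<union> \<tau>)) = k"
    using Suc(2) j by (metis Diff_insert Un_iff Un_insert_left card_Diff_singleton diff_Suc_1 finite insert_iff UNIV_I Diff_iff)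
  have c2: "card (UNIV - (\<sigma> \<union> insert j \<tau>)) = k"
    using Suc(2) j by (metis Diff_insert Un_iff Un_insert_right card_Diff_singleton diff_Suc_1 finite insert_iff UNIV_I Diff_iff)
  have "pmon (insert j \<sigma>) \<tau> \<in> neural_ideal C"
    using Suc(1)[OF c1[symmetric]] Suc(3,4) j unfolding I_iff by auto
  moreover have "pmon \<sigma> (insert j \<tau>) \<in> neural_ideal C"
    using Suc(1)[OF c2[symmetric]] Suc(3,4) j unfolding I_iff by auto
  ultimately show ?case unfolding pmon_split[OF j] neural_ideal_def by (rule ig_add)
qed

lemma bit_mult_one: "(x::bit) * y = 1 \<Longrightarrow> x = 1"
  by (metis bit_not_one_iff mult_zero_left)

lemma if_one: "(if P then 1 else 0 :: bit) = 1 \<Longrightarrow> P"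
  by (cases P) auto

lemma pm_dvd:
  fixes s t :: "'n::finite set"
  assumes "pmon a b dvd pmon s t" "s \<inter> t = {}"
  shows "a \<subseteq> s \<and> b \<subseteq> t"
proof -
  obtain k where k: "pmon s t = pmon a b * k" using assms(1) by blast
  have "eval_at (pmon s t) s = 1" "eval_at (pmon s t) (UNIV - t) = 1"
    unfolding ev_pmon by (rule if_P, use assms(2) in blast)+
  then have "eval_at (pmon a b) s = 1" "eval_at (pmon a b) (UNIV - t) = 1"
    unfolding k ev_mult by (blast dest: bit_mult_one)+
  then have "a \<subseteq> s \<and> b \<inter> s = {}" "a \<subseteq> UNIV - t \<and> b \<inter> (UNIV - t) = {}"
    unfolding ev_pmon by (blast dest: if_one)+
  then show ?thesis by blast
qed

lemma exists_CF:
  fixes C :: "'n::finite set set"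
  assumes "\<sigma> \<inter> \<tau> = {}" "pmon \<sigma> \<tau> \<in> neural_ideal C"
  shows "\<exists>a b. a \<subseteq> \<sigma> \<and> b \<subseteq> \<tau> \<and> pmon a b \<in> canonical_form C"
proof -
  define P where "P = (\<lambda>(a, b). a \<subseteq> \<sigma> \<and> b \<subseteq> \<tau> \<and> pmon a b \<in> neural_ideal C)"
  have "P (\<sigma>, \<tau>)" using assms unfolding P_def by auto
  then obtain ab where ab: "P ab" "\<forall>y. P y \<longrightarrow> (\<lambda>(a,b). card a + card b) ab \<le> (\<lambda>(a,b). card a + card b) y"
    using ex_has_least_nat[of P "(\<sigma>, \<tau>)" "\<lambda>(a,b). card a + card b"] by blast
  obtain a b where abd: "ab = (a, b)" by (cases ab)
  have Pab: "a \<subseteq> \<sigma>" "b \<subseteq> \<tau>" "pmon a b \<in> neural_ideal C" using ab(1) unfolding abd P_def by auto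
  have min: "\<And>a' b'. P (a', b') \<Longrightarrow> card a + card b \<le> card a' + card b'" using ab(2) unfolding abd by auto
  have disj: "a \<inter> b = {}" using Pab assms(1) by auto
  have "pmon a b \<in> canonical_form C"
    unfolding canonical_form_def
  proof (intro CollectI conjI allI impI)
    show "pseudo_monomial (pmon a b)" unfolding pseudo_monomial_def using disj by blast
    show "pmon a b \<in> neural_ideal C" by (fact Pab(3))
    fix g assume g: "pseudo_monomial g \<and> g \<in> neural_ideal C \<and> g \<noteq> pmon a b"
    then obtain a' b' where g': "a' \<inter> b' = {}" "g = pmon a' b'" unfolding pseudo_monomial_def by blast
    show "\<not> g dvd pmon a b"
    proof
      assume "g dvd pmon a b"
      then have sub: "a' \<subseteq> a" "b' \<subseteq> b" using pm_dvd[of a' b' a b] disj g' by auto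
      then have "P (a', b')" using Pab g g' unfolding P_def by auto
      then have "card a + card b \<le> card a' + card b'" by (rule min)
      moreover have "card a' \<le> card a" "card b' \<le> card b" using sub by (auto intro: card_mono)
      ultimately have "card a' = card a" "card b' = card b" by auto
      then have "a' = a" "b' = b" using card_subset_eq[of a a'] card_subset_eq[of b b'] sub by simp_all
      then show False using g g' by auto
    qed
  qed
  then show ?thesis using Pab by blast
qed

lemma xymon_mult:
  fixes a s b t :: "'n::finite set"
  assumes "a \<subseteq> s" "b \<subseteq> t"
  shows "xymon s t = xymon a b * xymon (s - a) (t - b)"
proof -
  have "(\<Prod>i\<in>s. Var (Inl i) :: ('n + 'n) mpoly2) = (\<Prod>i\<in>a. Var (Inl i)) * (\<Prod>i\<in>s - a. Var (Inl i))"
    by (simp add: prod.subset_diff[OF assms(1)] mult.commute)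
  moreover have "(\<Prod>i\<in>t. Var (Inr i) :: ('n + 'n) mpoly2) = (\<Prod>i\<in>b. Var (Inr i)) * (\<Prod>i\<in>t - b. Var (Inr i))"
    by (simp add: prod.subset_diff[OF assms(2)] mult.commute)
  ultimately show ?thesis unfolding xymon_def by (simp add: mult_ac)
qed


theorem lemma6p7:
  fixes C :: "'n::finite set set"
  assumes "C \<noteq> {}"
  shows "(\<forall>\<sigma> \<tau>. xymon \<sigma> \<tau> \<in> SR_ideal_polar C \<longleftrightarrow> pmon \<sigma> \<tau> \<in> I_code C)
    \<and> SR_ideal_polar C =
        ideal_gen ({xymon \<sigma> \<tau> | \<sigma> \<tau>. pmon \<sigma> \<tau> \<in> canonical_form C}
                   \<union> {Var (Inl i) * Var (Inr i) | i. True})"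
proof (intro conjI allI equalityI)
  fix \<sigma> \<tau> :: "'n set"
  show "xymon \<sigma> \<tau> \<in> SR_ideal_polar C \<longleftrightarrow> pmon \<sigma> \<tau> \<in> I_code C" by (rule part1)
next
  let ?R = "ideal_gen ({xymon \<sigma> \<tau> | \<sigma> \<tau>. pmon \<sigma> \<tau> \<in> canonical_form C}
                   \<union> {Var (Inl i) * Var (Inr i) | i. True})"
  have xy: "Var (Inl i) * Var (Inr i) = xymon {i} {i}" for i :: 'n
    by (simp add: xymon_def)
  show "SR_ideal_polar C \<subseteq> ?R"
    unfolding SR_ideal_polar_def
  proof (rule ig_mono, rule subsetI)
    fix g :: "('n + 'n) mpoly2" assume "g \<in> {xymon \<sigma> \<tau> | \<sigma> \<tau>. Inl ` \<sigma> \<union> Inr ` \<tau> \<notin> polar_complex C}"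
    then obtain \<sigma> \<tau> where g: "g = xymon \<sigma> \<tau>" and nf: "Inl ` \<sigma> \<union> Inr ` \<tau> \<notin> polar_complex C" by blast
    have "xymon \<sigma> \<tau> \<in> ?R"
    proof (cases "\<sigma> \<inter> \<tau> = {}")
      case True
      have "pmon \<sigma> \<tau> \<in> I_code C" using nf unfolding I_iff face_iff by assumption
      then have "pmon \<sigma> \<tau> \<in> neural_ideal C" by (rule I_to_J[OF True])
      from exists_CF[OF True this] obtain a b where ab: "a \<subseteq> \<sigma>" "b \<subseteq> \<tau>" "pmon a b \<in> canonical_form C"
        by blast
      have "xymon a b \<in> {xymon \<sigma> \<tau> | \<sigma> \<tau>. pmon \<sigma> \<tau> \<in> canonical_form C}"
        using ab(3) by blast
      then have "xymon a b \<in> ?R" by (intro ig_base UnI1)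
      then show ?thesis unfolding xymon_mult[OF ab(1,2)] by (rule ig_mult2)
    next
      case False
      then obtain i where i: "i \<in> \<sigma>" "i \<in> \<tau>" by blast
      have "Var (Inl i) * Var (Inr i) \<in> {Var (Inl i) * Var (Inr i) | i. True}" by blast
      then have "Var (Inl i) * Var (Inr i) \<in> ?R" by (intro ig_base UnI2)
      then have "xymon {i} {i} \<in> ?R" by (simp only: xy)
      have sub: "{i} \<subseteq> \<sigma>" "{i} \<subseteq> \<tau>" using i by auto
      show ?thesis unfolding xymon_mult[OF sub] by (rule ig_mult2) fact
    qed
    then show "g \<in> ?R" unfolding g(1) .
  qed
next
  have xy: "Var (Inl i) * Var (Inr i) = xymon {i} {i}" for i :: 'n
    by (simp add: xymon_def)
  show "ideal_gen ({xymon \<sigma> \<tau> | \<sigma> \<tau>. pmon \<sigma> \<tau> \<in> canonical_form C}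
                   \<union> {Var (Inl i) * Var (Inr i) | i. True}) \<subseteq> SR_ideal_polar C"
    unfolding SR_ideal_polar_def
  proof (rule ig_mono, rule subsetI, erule UnE)
    fix g :: "('n + 'n) mpoly2" assume "g \<in> {xymon \<sigma> \<tau> | \<sigma> \<tau>. pmon \<sigma> \<tau> \<in> canonical_form C}"
    then obtain \<sigma> \<tau> where g: "g = xymon \<sigma> \<tau>" "pmon \<sigma> \<tau> \<in> canonical_form C" by blast
    from g(2) have "pmon \<sigma> \<tau> \<in> I_code C" using J_sub_I unfolding canonical_form_def by blast
    then have "g \<in> SR_ideal_polar C" unfolding g(1) by (simp only: part1)
    then show "g \<in> ideal_gen {xymon \<sigma> \<tau> | \<sigma> \<tau>. Inl ` \<sigma> \<union> Inr ` \<tau> \<notin> polar_complex C}" unfolding SR_ideal_polar_def .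
  next
    fix g :: "('n + 'n) mpoly2" assume "g \<in> {Var (Inl i) * Var (Inr i) | i. True}"
    then obtain i :: 'n where g: "g = Var (Inl i) * Var (Inr i)" by blast
    have "Inl ` {i} \<union> Inr ` {i} \<notin> polar_complex C" by (simp only: face_iff) blast
    then have "g \<in> SR_ideal_polar C" unfolding g xy SR_iff .
    then show "g \<in> ideal_gen {xymon \<sigma> \<tau> | \<sigma> \<tau>. Inl ` \<sigma> \<union> Inr ` \<tau> \<notin> polar_complex C}" unfolding SR_ideal_polar_def .
  qed
qed

end
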